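(* For every tree embedding $(\mathcal T,\mathcal M,y)$ in the support of $\mathcal D$, the set $Z_{\mathcal T}=\bigcup\{Z_F : F\subseteq E(H),\ |F|=\ell,\ \mathcal T\text{ is good for }F\}$ satisfies $|Z_{\mathcal T}|\le q\cdot n^{2\ell}\cdot 2^{2\ell\beta}$.
   Context: Standing setup. $G=(V,E)$ is an undirected graph with $n=|V|$, demand-pairs $(S_i,T_i)$, $i\in[q]$, of subsets of $V$. $\ell\ge1$ is an integer and $E_\ell\subseteq E$ an edge set such that in $(V,E_\ell)$ every $(S_i,T_i)$ is $\ell$-edge-connected. $x:E\to[0,1]$ satisfies $x_e=1$ for $e\in E_\ell$ and $\sum_{e\in\delta_G(X)}x_e\ge \ell+1$ for every $i\in[q]$ and every $X$ with $T_i\subseteq X\subseteq V\setminus S_i$. $\beta\ge1$ is a real. $\mathsf{LARGE}=\{e: x_e\ge 1/(4\ell\beta)\}$ and $H=(V,\mathsf{LARGE})$. Capacities: $\tilde x_e=1/(4\ell\beta)$ if $e\in\mathsf{LARGE}$; $\tilde x_e=0$ if $x_e<\frac{1}{2n^2}\cdot\frac1{4\ell\beta}$; $\tilde x_e=x_e$ otherwise. A tree embedding $(\mathcal T,\mathcal M,y)$ of $(G,\tilde x)$: $\mathcal T$ is a tree; $\mathcal M$ maps nodes of $\mathcal T$ to vertices of $G$ and is a bijection between leaves of $\mathcal T$ and $V$ (a vertex set of $G$ is identified with the corresponding leaf set); each tree edge $f=(u,v)$ is mapped to a path $\mathcal M(f)$ in $G$ between $\mathcal M(u)$ and $\mathcal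 M(v)$; $y(f)=\tilde x(\delta_G(X))$ where $(X,V\setminus X)$ is the leaf partition induced by $\mathcal T-f$. $\mathcal M^{-1}(e)=\{f: e\in\mathcal M(f)\}$, $\mathcal M^{-1}(F)=\bigcup_{e\in F}\mathcal M^{-1}(e)$. $\mathcal D$ is a probability distribution over tree embeddings of $(G,\tilde x)$ with $\mathbb{E}_{\mathcal T\sim\mathcal D}[\sum_{f\in\mathcal M^{-1}(e)}y(f)]\le\beta\,\tilde x_e$ for every $e\in E$, and for every tree in its support and all disjoint $A,B\subseteq V$, the maximum $A$–$B$ flow in $\mathcal T$ under $y$ is at least the maximum $A$–$B$ flow in $G$ under $\tilde x$. A tree embedding is good for $F\subseteq E(H)$ if $\sum_{f\in\mathcal M^{-1}(F)}y(f)\le1/2$. Components: $\mathbb Q^F$ is the set of vertex sets of connected components of $(V,E(H)\setminus F)$; for nonempty $S\subseteq V$, $Q_S$ is the union of those components meeting $S$. A component $Q\in\mathbb Q^F$ is shattered (w.r.t. $\mathcal T$) if its leaves are not all in one connected component of $\mathcal T$ with the edges $\mathcal M^{-1}(F)$ removed. $\mathbb U^F_{\mathcal T}$ is the set of all partitions $(A',B')$ (parts may be empty) of the set of shattered components, and $Z_F=\{(A'\cup Q_{S_i},\,B'\cup Q_{T_i}) : (A',B')\in\mathbb U^F_{\mathcal T},\ i\in[q],\ Q_{S_i}\cap Q_{T_i}=\emptyset\}$. *)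

theory Defs
  imports "HOL-Probability.Probability"
begin

definition is_graph :: "'v set \<Rightarrow> 'v set set \<Rightarrow> bool" where
  "is_graph V E \<longleftrightarrow> finite V \<and> (\<forall>e\<in>E. e \<subseteq> V \<and> card e = 2)"

definition cut :: "'v set set \<Rightarrow> 'v set \<Rightarrow> 'v set set" where
  "cut E X = {e \<in> E. card (e \<inter> X) = 1}"

definition edge_connected :: "nat \<Rightarrow> 'v set \<Rightarrow> 'v set set \<Rightarrow> 'v set \<Rightarrow> 'v set \<Rightarrow> bool" where
  "edge_connected k V F S T \<longleftrightarrow>
     (\<forall>X. T \<subseteq> X \<and> X \<subseteq> V - S \<longrightarrow> card (cut F X) \<ge> k)"

definition adj :: "'a set set \<Rightarrow> ('a \<times> 'a) set" where
  "adj R = {(a, b). {a, b} \<in> R}"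

definition comp :: "'v set \<Rightarrow> 'v set set \<Rightarrow> 'v \<Rightarrow> 'v set" where
  "comp V R v = {w \<in> V. (v, w) \<in> (adj R)\<^sup>*}"

definition comps :: "'v set \<Rightarrow> 'v set set \<Rightarrow> 'v set set" where
  "comps V R = {comp V R v | v. v \<in> V}"

definition QS :: "'v set \<Rightarrow> 'v set set \<Rightarrow> 'v set \<Rightarrow> 'v set" where
  "QS V R S = \<Union>{Q \<in> comps V R. Q \<inter> S \<noteq> {}}"

definition is_gpath :: "'v set \<Rightarrow> 'v set set \<Rightarrow> 'v list \<Rightarrow> bool" where
  "is_gpath V E p \<longleftrightarrow> p \<noteq> [] \<and> distinct p \<and> set p \<subseteq> V \<and>
     (\<forall>i. Suc i < length p \<longrightarrow> {p ! i, p ! Suc i} \<in> E)"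

definition path_edges :: "'v list \<Rightarrow> 'v set set" where
  "path_edges p = {{p ! i, p ! Suc i} | i. Suc i < length p}"

text \<open>An A-B flow in an undirected capacitated graph (Nd, Ed, c): g u v is the
  amount sent from u to v along edge {u,v}; on each edge the flow in both
  directions together respects the capacity; conservation holds outside A \<union> B.\<close>
definition is_flow :: "'a set \<Rightarrow> 'a set set \<Rightarrow> ('a set \<Rightarrow> real) \<Rightarrow> 'a set \<Rightarrow> 'a set
     \<Rightarrow> ('a \<Rightarrow> 'a \<Rightarrow> real) \<Rightarrow> bool" where
  "is_flow Nd Ed c A B g \<longleftrightarrow>
     (\<forall>u v. 0 \<le> g u v) \<and>
     (\<forall>u v. (u \<notin> Nd \<or> v \<notin> Nd \<or> u = v \<or> {u, v} \<notin> Ed) \<longrightarrow> g u v = 0) \<and>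
     (\<forall>u v. {u, v} \<in> Ed \<longrightarrow> g u v + g v u \<le> c {u, v}) \<and>
     (\<forall>w \<in> Nd - (A \<union> B). (\<Sum>v\<in>Nd. g w v) = (\<Sum>v\<in>Nd. g v w))"

definition flow_value :: "'a set \<Rightarrow> 'a set \<Rightarrow> ('a \<Rightarrow> 'a \<Rightarrow> real) \<Rightarrow> real" where
  "flow_value Nd A g = (\<Sum>a\<in>A \<inter> Nd. \<Sum>v\<in>Nd. g a v - g v a)"

definition max_flow :: "'a set \<Rightarrow> 'a set set \<Rightarrow> ('a set \<Rightarrow> real) \<Rightarrow> 'a set \<Rightarrow> 'a set \<Rightarrow> real" where
  "max_flow Nd Ed c A B = Sup (flow_value Nd A ` {g. is_flow Nd Ed c A B g})"

record ('n, 'v) tembed =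
  tnodes :: "'n set"
  tedges :: "'n set set"
  tmap   :: "'n \<Rightarrow> 'v"
  tpath  :: "'n set \<Rightarrow> 'v list"

text \<open>A (finite) tree: connected, and every edge is a bridge (minimally connected).\<close>
definition is_tree :: "'n set \<Rightarrow> 'n set set \<Rightarrow> bool" where
  "is_tree N TE \<longleftrightarrow> finite N \<and> N \<noteq> {} \<and> (\<forall>f\<in>TE. f \<subseteq> N \<and> card f = 2) \<and>
     (\<forall>u\<in>N. \<forall>w\<in>N. (u, w) \<in> (adj TE)\<^sup>*) \<and>
     (\<forall>f\<in>TE. \<exists>u w. f = {u, w} \<and> (u, w) \<notin> (adj (TE - {f}))\<^sup>*)"

definition tleaves :: "('n, 'v) tembed \<Rightarrow> 'n set" where
  "tleaves T = {u \<in> tnodes T. card {f \<in> tedges T. u \<in> f} \<le> 1}"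

definition is_tree_embedding :: "'v set \<Rightarrow> 'v set set \<Rightarrow> ('n, 'v) tembed \<Rightarrow> bool" where
  "is_tree_embedding V E T \<longleftrightarrow>
     is_tree (tnodes T) (tedges T) \<and>
     tmap T ` tnodes T \<subseteq> V \<and>
     bij_betw (tmap T) (tleaves T) V \<and>
     (\<forall>f\<in>tedges T. is_gpath V E (tpath T f) \<and>
        {hd (tpath T f), last (tpath T f)} = tmap T ` f)"

text \<open>The leaves on one side of the partition induced by removing the tree edge f.\<close>
definition tside :: "('n, 'v) tembed \<Rightarrow> 'n set \<Rightarrow> 'n set" where
  "tside T f = {w \<in> tleaves T. (SOME u. u \<in> f, w) \<in> (adj (tedges T - {f}))\<^sup>*}"

definition ty :: "'v set set \<Rightarrow> ('v set \<Rightarrow> real) \<Rightarrow> ('n, 'v) tembed \<Rightarrow> 'n set \<Rightarrow> real" where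
  "ty E c T f = sum c (cut E (tmap T ` tside T f))"

definition Minv :: "('n, 'v) tembed \<Rightarrow> 'v set set \<Rightarrow> 'n set set" where
  "Minv T F = {f \<in> tedges T. path_edges (tpath T f) \<inter> F \<noteq> {}}"

definition flow_dominating :: "'v set \<Rightarrow> 'v set set \<Rightarrow> ('v set \<Rightarrow> real) \<Rightarrow> ('n, 'v) tembed \<Rightarrow> bool" where
  "flow_dominating V E c T \<longleftrightarrow>
     (\<forall>A B. A \<subseteq> V \<longrightarrow> B \<subseteq> V \<longrightarrow> A \<inter> B = {} \<longrightarrow>
        max_flow (tnodes T) (tedges T) (ty E c T)
          {w \<in> tleaves T. tmap T w \<in> A} {w \<in> tleaves T. tmap T w \<in> B}
        \<ge> max_flow V E c A B)"

definition good :: "'v set set \<Rightarrow> ('v set \<Rightarrow> real) \<Rightarrow> ('n, 'v) tembed \<Rightarrow> 'v set set \<Rightarrow> bool" where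
  "good E c T F \<longleftrightarrow> (\<Sum>f\<in>Minv T F. ty E c T f) \<le> 1 / 2"

definition LARGE :: "'v set set \<Rightarrow> ('v set \<Rightarrow> real) \<Rightarrow> nat \<Rightarrow> real \<Rightarrow> 'v set set" where
  "LARGE E x l \<beta> = {e \<in> E. x e \<ge> 1 / (4 * real l * \<beta>)}"

definition xtilde :: "nat \<Rightarrow> ('v set \<Rightarrow> real) \<Rightarrow> nat \<Rightarrow> real \<Rightarrow> 'v set \<Rightarrow> real" where
  "xtilde n x l \<beta> e =
     (if x e \<ge> 1 / (4 * real l * \<beta>) then 1 / (4 * real l * \<beta>)
      else if x e < 1 / (2 * real n ^ 2) * (1 / (4 * real l * \<beta>)) then 0
      else x e)"

definition shattered :: "'v set \<Rightarrow> 'v set set \<Rightarrow> ('n, 'v) tembed \<Rightarrow> 'v set set \<Rightarrow> 'v set set" where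
  "shattered V EH T F = {Q \<in> comps V (EH - F).
     \<not> (\<exists>u \<in> tnodes T. \<forall>w \<in> {w \<in> tleaves T. tmap T w \<in> Q}.
            (u, w) \<in> (adj (tedges T - Minv T F))\<^sup>*)}"

definition ZF :: "'v set \<Rightarrow> 'v set set \<Rightarrow> nat \<Rightarrow> (nat \<Rightarrow> 'v set) \<Rightarrow> (nat \<Rightarrow> 'v set)
     \<Rightarrow> ('n, 'v) tembed \<Rightarrow> 'v set set \<Rightarrow> ('v set \<times> 'v set) set" where
  "ZF V EH q S Tg T F =
     {(\<Union>A' \<union> QS V (EH - F) (S i), \<Union>B' \<union> QS V (EH - F) (Tg i)) | A' B' i.
        A' \<union> B' = shattered V EH T F \<and> A' \<inter> B' = {} \<and> i \<in> {1..q} \<and>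
        QS V (EH - F) (S i) \<inter> QS V (EH - F) (Tg i) = {}}"

end

theory Submission
  imports Defs
begin


lemma adj_sym: "(a,b) \<in> adj R \<Longrightarrow> (b,a) \<in> adj R"
  by (auto simp: adj_def insert_commute)

lemma rt_sym: "(a,b) \<in> (adj R)\<^sup>* \<Longrightarrow> (b,a) \<in> (adj R)\<^sup>*"
proof (induction rule: rtrancl_induct)
  case base then show ?case by simp
next
  case (step y z) then show ?case
    by (meson adj_sym converse_rtrancl_into_rtrancl)
qed

lemma adj_mono: "R \<subseteq> R' \<Longrightarrow> (a,b) \<in> (adj R)\<^sup>* \<Longrightarrow> (a,b) \<in> (adj R')\<^sup>*"
proof -
  assume "R \<subseteq> R'" "(a,b) \<in> (adj R)\<^sup>*"
  moreover have "adj R \<subseteq> adj R'" using \<open>R \<subseteq> R'\<close> by (auto simp: adj_def)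
  ultimately show ?thesis using rtrancl_mono by blast
qed

lemma split_rt:
  assumes "(a,z) \<in> (adj R)\<^sup>*"
  shows "(a,z) \<in> (adj (R-{{e1,e2}}))\<^sup>* \<or>
    (((a,e1) \<in> (adj (R-{{e1,e2}}))\<^sup>* \<or> (a,e2) \<in> (adj (R-{{e1,e2}}))\<^sup>*) \<and>
     ((e1,z) \<in> (adj (R-{{e1,e2}}))\<^sup>* \<or> (e2,z) \<in> (adj (R-{{e1,e2}}))\<^sup>*))"
  using assms
proof (induction rule: rtrancl_induct)
  case base then show ?case by simp
next
  case (step y z)
  show ?case
  proof (cases "{y,z} = {e1,e2}")
    case True
    then have "y \<in> {e1,e2}" "z \<in> {e1,e2}" by auto
    then show ?thesis using step.IH by auto
  next
    case False
    then have "(y,z) \<in> adj (R-{{e1,e2}})" using step.hyps(2) by (auto simp: adj_def)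
    then show ?thesis using step.IH by (meson rtrancl.rtrancl_into_rtrancl)
  qed
qed

lemma cross_rt:
  assumes "(p,r) \<in> (adj R)\<^sup>*" "p \<in> X" "r \<notin> X"
  shows "\<exists>a b. {a,b} \<in> R \<and> a \<in> X \<and> b \<notin> X \<and> (p,a) \<in> (adj R)\<^sup>*"
  using assms
proof (induction rule: rtrancl_induct)
  case base then show ?case by simp
next
  case (step y z)
  show ?case
  proof (cases "y \<in> X")
    case True then show ?thesis using step by (auto simp: adj_def)
  next
    case False then show ?thesis using step by blast
  qed
qed

definition acyc :: "'a set set \<Rightarrow> bool" where
  "acyc R \<longleftrightarrow> (\<forall>g\<in>R. \<exists>u w. g = {u,w} \<and> (u,w) \<notin> (adj (R-{g}))\<^sup>*)"

lemma acyc_minus: "acyc R \<Longrightarrow> acyc (R - {f})"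
  unfolding acyc_def
proof
  fix g assume A: "\<forall>g\<in>R. \<exists>u w. g = {u, w} \<and> (u, w) \<notin> (adj (R - {g}))\<^sup>*" and g: "g \<in> R - {f}"
  then obtain u w where "g = {u,w}" "(u, w) \<notin> (adj (R - {g}))\<^sup>*" by blast
  moreover have "R - {f} - {g} \<subseteq> R - {g}" by auto
  ultimately show "\<exists>u w. g = {u, w} \<and> (u, w) \<notin> (adj (R - {f} - {g}))\<^sup>*"
    using adj_mono[of "R - {f} - {g}" "R - {g}"] by blast
qed

lemma single_edge:
  assumes "finite M" "acyc R" "(a,b) \<in> (adj R)\<^sup>*" "(a,b) \<notin> (adj (R - M))\<^sup>*"
  shows "\<exists>f\<in>M. (a,b) \<notin> (adj (R - {f}))\<^sup>*"
  using assms
proof (induction M arbitrary: R rule: finite_induct)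
  case empty then show ?case by simp
next
  case (insert f M R)
  show ?case
  proof (cases "(a,b) \<in> (adj (R-{f}))\<^sup>*")
    case False then show ?thesis by blast
  next
    case True
    have ac: "acyc (R - {f})" using insert.prems acyc_minus by blast
    have "R - insert f M = R - {f} - M" by auto
    then have "(a,b) \<notin> (adj (R - {f} - M))\<^sup>*" using insert.prems by simp
    then obtain g where gM: "g \<in> M" and ng: "(a,b) \<notin> (adj (R - {f} - {g}))\<^sup>*"
      using insert.IH[OF ac True] by blast
    have "(a,b) \<notin> (adj (R - {g}))\<^sup>*"
    proof
      assume C: "(a,b) \<in> (adj (R - {g}))\<^sup>*"
      have gR: "g \<in> R - {f}"
      proof (rule ccontr)
        assume "g \<notin> R - {f}"
        then have "R - {f} - {g} = R - {f}" by auto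
        then show False using ng True by simp
      qed
      have fR: "f \<in> R"
      proof (rule ccontr)
        assume "f \<notin> R"
        then have "R - {g} = R - {f} - {g}" by auto
        then show False using C ng by simp
      qed
      obtain c d where fcd: "f = {c,d}" and ncd: "(c,d) \<notin> (adj (R-{f}))\<^sup>*"
        using insert.prems(1) fR unfolding acyc_def by blast
      obtain e1 e2 where ge: "g = {e1,e2}"
        using insert.prems(1) gR unfolding acyc_def by blast
      define S where "S = (adj (R - {f} - {g}))\<^sup>*"
      define K where "K = (adj (R - {f}))\<^sup>*"
      have eq: "R - {g} - {f} = R - {f} - {g}" by auto
      have SK: "\<And>u v. (u,v) \<in> S \<Longrightarrow> (u,v) \<in> K" unfolding S_def K_def
        using adj_mono[of "R - {f} - {g}" "R - {f}"] by blast
      have Ssym: "\<And>u v. (u,v) \<in> S \<Longrightarrow> (v,u) \<in> S" unfolding S_def by (rule rt_sym)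
      have Strans: "\<And>u v w. (u,v) \<in> S \<Longrightarrow> (v,w) \<in> S \<Longrightarrow> (u,w) \<in> S" unfolding S_def
        by (meson rtrancl_trans)
      have Ktrans: "\<And>u v w. (u,v) \<in> K \<Longrightarrow> (v,w) \<in> K \<Longrightarrow> (u,w) \<in> K" unfolding K_def
        by (meson rtrancl_trans)
      have Ksym: "\<And>u v. (u,v) \<in> K \<Longrightarrow> (v,u) \<in> K" unfolding K_def by (rule rt_sym)
      have e12: "(e1,e2) \<in> K" unfolding K_def using gR ge by (auto simp: adj_def)
      have nS: "(a,b) \<notin> S" using ng S_def by simp
      have eq1: "R - {f} - {{e1,e2}} = R - {f} - {g}" using ge by simp
      have eq2: "R - {g} - {{c,d}} = R - {f} - {g}" using fcd by auto
      note s1' = split_rt[OF True, of e1 e2, unfolded eq1, folded S_def]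
      note s2' = split_rt[OF C, of c d, unfolded eq2, folded S_def]
      have s1: "((a,e1) \<in> S \<or> (a,e2) \<in> S) \<and> ((e1,b) \<in> S \<or> (e2,b) \<in> S)"
        using s1' nS by blast
      have s2: "((a,c) \<in> S \<or> (a,d) \<in> S) \<and> ((c,b) \<in> S \<or> (d,b) \<in> S)"
        using s2' nS by blast
      have "\<exists>x y. (a,x) \<in> S \<and> (y,b) \<in> S \<and> (x,y) \<in> K"
      proof -
        have "\<not> ((a,e1) \<in> S \<and> (e1,b) \<in> S)" using nS Strans by metis
        moreover have "\<not> ((a,e2) \<in> S \<and> (e2,b) \<in> S)" using nS Strans by metis
        ultimately have "(a,e1) \<in> S \<and> (e2,b) \<in> S \<or> (a,e2) \<in> S \<and> (e1,b) \<in> S"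
          using s1 by blast
        then show ?thesis using e12 Ksym[OF e12] by blast
      qed
      then obtain x y where xy: "(a,x) \<in> S" "(y,b) \<in> S" "(x,y) \<in> K" by blast
      have "\<not> ((a,c) \<in> S \<and> (c,b) \<in> S)" using nS Strans by metis
      moreover have "\<not> ((a,d) \<in> S \<and> (d,b) \<in> S)" using nS Strans by metis
      ultimately have "(a,c) \<in> S \<and> (d,b) \<in> S \<or> (a,d) \<in> S \<and> (c,b) \<in> S"
        using s2 by blast
      then obtain c' d' where cd: "(a,c') \<in> S" "(d',b) \<in> S" "(c' = c \<and> d' = d) \<or> (c' = d \<and> d' = c)"
        by blast
      have "(c',x) \<in> S" using Strans[OF Ssym[OF cd(1)] xy(1)] .
      then have "(c',x) \<in> K" by (rule SK)
      moreover have "(y,d') \<in> S" using Strans[OF xy(2) Ssym[OF cd(2)]] .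
      then have "(y,d') \<in> K" by (rule SK)
      ultimately have "(c',d') \<in> K" using xy(3) Ktrans by metis
      then have "(c,d) \<in> K \<or> (d,c) \<in> K" using cd(3) by blast
      then show False using ncd Ksym K_def by blast
    qed
    then show ?thesis using gM by blast
  qed
qed



lemma comp_eq:
  assumes "Q1 \<in> comps V R" "Q2 \<in> comps V R" "z \<in> Q1" "z \<in> Q2"
  shows "Q1 = Q2"
proof -
  obtain v1 where v1: "Q1 = comp V R v1" using assms(1) unfolding comps_def by blast
  obtain v2 where v2: "Q2 = comp V R v2" using assms(2) unfolding comps_def by blast
  have z1: "(v1,z) \<in> (adj R)\<^sup>*" using assms(3) v1 unfolding comp_def by blast
  have z2: "(v2,z) \<in> (adj R)\<^sup>*" using assms(4) v2 unfolding comp_def by blast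
  have "(v1,v2) \<in> (adj R)\<^sup>*" using rtrancl_trans[OF z1 rt_sym[OF z2]] .
  moreover have "(v2,v1) \<in> (adj R)\<^sup>*" using rtrancl_trans[OF z2 rt_sym[OF z1]] .
  ultimately show ?thesis unfolding v1 v2 comp_def
    by (auto intro: rtrancl_trans)
qed

lemma Q_edge:
  assumes Q: "Q \<in> comps V R" and RV: "\<forall>e\<in>R. e \<subseteq> V"
    and v0: "v0 \<in> Q" and v1: "v1 \<in> Q" and X: "(v0 \<in> X) \<noteq> (v1 \<in> X)"
  shows "\<exists>e\<in>R. e \<subseteq> Q \<and> card (e \<inter> X) = 1"
proof -
  obtain v where v: "Q = comp V R v" using Q unfolding comps_def by blast
  have a0: "(v,v0) \<in> (adj R)\<^sup>*" using v0 v unfolding comp_def by blast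
  have a1: "(v,v1) \<in> (adj R)\<^sup>*" using v1 v unfolding comp_def by blast
  have gen: "\<exists>e\<in>R. e \<subseteq> Q \<and> card (e \<inter> X) = 1"
    if p: "(v,p) \<in> (adj R)\<^sup>*" and r: "(v,r) \<in> (adj R)\<^sup>*" and pX: "p \<in> X" and rX: "r \<notin> X" for p r
  proof -
    have "(p,r) \<in> (adj R)\<^sup>*" using rtrancl_trans[OF rt_sym[OF p] r] .
    then obtain a b where ab: "{a,b} \<in> R" "a \<in> X" "b \<notin> X" "(p,a) \<in> (adj R)\<^sup>*"
      using cross_rt pX rX by metis
    have va: "(v,a) \<in> (adj R)\<^sup>*" using rtrancl_trans[OF p ab(4)] .
    have "(a,b) \<in> adj R" using ab(1) by (simp add: adj_def)
    then have vb: "(v,b) \<in> (adj R)\<^sup>*" using va by (meson rtrancl.rtrancl_into_rtrancl)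
    have "{a,b} \<subseteq> V" using RV ab(1) by blast
    then have "{a,b} \<subseteq> Q" using va vb v unfolding comp_def by blast
    moreover have "{a,b} \<inter> X = {a}" using ab by auto
    ultimately show ?thesis using ab(1) by (intro bexI[of _ "{a,b}"]) auto
  qed
  show ?thesis
  proof (cases "v0 \<in> X")
    case True then show ?thesis using gen[OF a0 a1] X by blast
  next
    case False then show ?thesis using gen[OF a1 a0] X by blast
  qed
qed

lemma tree_sep:
  assumes tr: "is_tree (tnodes T) (tedges T)" and fin: "finite M"
    and w0: "w0 \<in> tnodes T" and w1: "w1 \<in> tnodes T"
    and nc: "(w0,w1) \<notin> (adj (tedges T - M))\<^sup>*"
  shows "\<exists>f\<in>M. f \<in> tedges T \<and> ((SOME u. u \<in> f, w0) \<in> (adj (tedges T - {f}))\<^sup>*) \<noteq>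
                            ((SOME u. u \<in> f, w1) \<in> (adj (tedges T - {f}))\<^sup>*)"
proof -
  let ?N = "tnodes T" and ?TE = "tedges T"
  have ac: "acyc ?TE" using tr unfolding is_tree_def acyc_def by blast
  have conn: "\<And>u w. u \<in> ?N \<Longrightarrow> w \<in> ?N \<Longrightarrow> (u,w) \<in> (adj ?TE)\<^sup>*"
    using tr unfolding is_tree_def by blast
  obtain f where fM: "f \<in> M" and nf: "(w0,w1) \<notin> (adj (?TE - {f}))\<^sup>*"
    using single_edge[OF fin ac conn[OF w0 w1] nc] by blast
  have fT: "f \<in> ?TE"
  proof (rule ccontr)
    assume "f \<notin> ?TE" then have "?TE - {f} = ?TE" by auto
    then show False using nf conn[OF w0 w1] by simp
  qed
  obtain a b where fab: "f = {a,b}" and nab: "(a,b) \<notin> (adj (?TE - {f}))\<^sup>*"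
    using ac fT unfolding acyc_def by blast
  have aN: "a \<in> ?N" using tr fT fab unfolding is_tree_def by blast
  define P where "P = (adj (?TE - {f}))\<^sup>*"
  have side: "(a,z) \<in> P \<or> (b,z) \<in> P" if z: "z \<in> ?N" for z
  proof -
    note sp = split_rt[OF conn[OF aN z], of a b, folded fab, folded P_def]
    then show ?thesis by blast
  qed
  have Psym: "\<And>u v. (u,v) \<in> P \<Longrightarrow> (v,u) \<in> P" unfolding P_def by (rule rt_sym)
  have Ptrans: "\<And>u v w. (u,v) \<in> P \<Longrightarrow> (v,w) \<in> P \<Longrightarrow> (u,w) \<in> P" unfolding P_def
    by (meson rtrancl_trans)
  have s: "(SOME u. u \<in> f) \<in> {a,b}" using fab by (metis insertI1 someI)
  have nab': "(a,b) \<notin> P" using nab P_def by simp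
  have n01: "(w0,w1) \<notin> P" using nf P_def by simp
  have "((s,w0) \<in> P) \<noteq> ((s,w1) \<in> P)" if "s \<in> {a,b}" for s
  proof -
    have A: "\<not> ((a,w0) \<in> P \<and> (a,w1) \<in> P)" using n01 Ptrans Psym by metis
    have B: "\<not> ((b,w0) \<in> P \<and> (b,w1) \<in> P)" using n01 Ptrans Psym by metis
    have C: "\<not> ((a,w0) \<in> P \<and> (b,w0) \<in> P)" using nab' Ptrans Psym by metis
    have D: "\<not> ((a,w1) \<in> P \<and> (b,w1) \<in> P)" using nab' Ptrans Psym by metis
    show ?thesis using side[OF w0] side[OF w1] A B C D that by blast
  qed
  then show ?thesis using fM fT s unfolding P_def by blast
qed



lemma sh_witness:
  assumes emb: "is_tree_embedding V E T" and EV: "\<forall>e\<in>E. e \<subseteq> V" and RE: "R \<subseteq> E"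
    and fin: "finite (Minv T F)"
    and Q: "Q \<in> shattered V R T F"
  shows "\<exists>f e. f \<in> Minv T F \<and> e \<in> cut E (tmap T ` tside T f) \<and> e \<in> R - F \<and> e \<subseteq> Q \<and> e \<noteq> {}"
proof -
  let ?M = "Minv T F"
  have tr: "is_tree (tnodes T) (tedges T)" and bij: "bij_betw (tmap T) (tleaves T) V"
    using emb unfolding is_tree_embedding_def by auto
  have Qc: "Q \<in> comps V (R - F)" and nsh: "\<not> (\<exists>u \<in> tnodes T. \<forall>w \<in> {w \<in> tleaves T. tmap T w \<in> Q}.
            (u, w) \<in> (adj (tedges T - ?M))\<^sup>*)" using Q unfolding shattered_def by auto
  obtain v where vV: "v \<in> V" and Qv: "Q = comp V (R - F) v" using Qc unfolding comps_def by blast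
  have vQ: "v \<in> Q" using vV Qv unfolding comp_def by simp
  obtain w0 where w0: "w0 \<in> tleaves T" "tmap T w0 = v" using bij vV
    by (metis bij_betw_iff_bijections)
  have lN: "tleaves T \<subseteq> tnodes T" unfolding tleaves_def by auto
  obtain w1 where w1: "w1 \<in> tleaves T" "tmap T w1 \<in> Q" and nc: "(w0,w1) \<notin> (adj (tedges T - ?M))\<^sup>*"
    using nsh w0 lN by blast
  obtain f where fM: "f \<in> ?M" and fT: "f \<in> tedges T" and
    dif: "((SOME u. u \<in> f, w0) \<in> (adj (tedges T - {f}))\<^sup>*) \<noteq>
          ((SOME u. u \<in> f, w1) \<in> (adj (tedges T - {f}))\<^sup>*)"
    using tree_sep[OF tr fin _ _ nc] w0(1) w1(1) lN by blast
  define X where "X = tmap T ` tside T f"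
  have inj: "inj_on (tmap T) (tleaves T)" using bij bij_betw_def by blast
  have sideL: "tside T f \<subseteq> tleaves T" unfolding tside_def by auto
  have memX: "(tmap T w \<in> X) = ((SOME u. u \<in> f, w) \<in> (adj (tedges T - {f}))\<^sup>*)"
    if "w \<in> tleaves T" for w
  proof -
    have "(tmap T w \<in> X) = (w \<in> tside T f)"
      unfolding X_def using inj sideL that by (meson inj_on_image_mem_iff)
    also have "\<dots> = ((SOME u. u \<in> f, w) \<in> (adj (tedges T - {f}))\<^sup>*)"
      unfolding tside_def using that by simp
    finally show ?thesis .
  qed
  have "(tmap T w0 \<in> X) \<noteq> (tmap T w1 \<in> X)" using memX[OF w0(1)] memX[OF w1(1)] dif by simp
  have RV': "\<forall>e\<in>R - F. e \<subseteq> V" using RE EV by blast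
  obtain e where e: "e \<in> R - F" "e \<subseteq> Q" "card (e \<inter> X) = 1"
    using Q_edge[OF Qc RV' _ w1(2)] \<open>(tmap T w0 \<in> X) \<noteq> (tmap T w1 \<in> X)\<close> vQ w0(2) by blast
  have "e \<noteq> {}" using e(3) by (metis card.empty empty_iff inf_bot_left zero_neq_one)
  moreover have "e \<in> cut E X" using e RE unfolding cut_def by blast
  ultimately show ?thesis using fM e unfolding X_def by blast
qed

lemma sh_bound:
  fixes c :: "'v set \<Rightarrow> real"
  assumes emb: "is_tree_embedding V E T" and EV: "\<forall>e\<in>E. e \<subseteq> V" and RE: "R \<subseteq> E"
    and finV: "finite V"
    and cpos: "\<forall>e\<in>E. 0 \<le> c e" and cR: "\<forall>e\<in>R. c e = \<delta>"
    and gd: "good E c T F" and dpos: "\<delta> \<ge> 0"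
  shows "real (card (shattered V R T F)) * \<delta> \<le> 1/2"
proof -
  let ?M = "Minv T F" and ?sh = "shattered V R T F"
  have tr: "is_tree (tnodes T) (tedges T)" using emb unfolding is_tree_embedding_def by auto
  have finTE: "finite (tedges T)"
  proof -
    have "tedges T \<subseteq> Pow (tnodes T)" using tr unfolding is_tree_def by blast
    moreover have "finite (tnodes T)" using tr unfolding is_tree_def by blast
    ultimately show ?thesis by (meson finite_Pow_iff finite_subset)
  qed
  have finM: "finite ?M" unfolding Minv_def using finTE by simp
  have finE: "finite E" using EV finV by (meson Pow_iff finite_Pow_iff finite_subset subsetI)
  define B where "B f = cut E (tmap T ` tside T f) \<inter> R" for f
  define P where "P = Sigma ?M B"
  have finB: "\<forall>f\<in>?M. finite (B f)" unfolding B_def cut_def using finE by auto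
  have finP: "finite P" unfolding P_def using finM finB by auto
  have wit: "\<forall>Q\<in>?sh. \<exists>p. fst p \<in> ?M \<and> snd p \<in> B (fst p) \<and> snd p \<subseteq> Q \<and> snd p \<noteq> {}"
  proof
    fix Q assume "Q \<in> ?sh"
    then obtain f e where "f \<in> ?M" "e \<in> cut E (tmap T ` tside T f)" "e \<in> R - F" "e \<subseteq> Q" "e \<noteq> {}"
      using sh_witness[OF emb EV RE finM] by blast
    then show "\<exists>p. fst p \<in> ?M \<and> snd p \<in> B (fst p) \<and> snd p \<subseteq> Q \<and> snd p \<noteq> {}"
      unfolding B_def by (intro exI[of _ "(f,e)"]) auto
  qed
  define h where "h Q = (SOME p. fst p \<in> ?M \<and> snd p \<in> B (fst p) \<and> snd p \<subseteq> Q \<and> snd p \<noteq> {})" for Q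
  have hQ: "fst (h Q) \<in> ?M \<and> snd (h Q) \<in> B (fst (h Q)) \<and> snd (h Q) \<subseteq> Q \<and> snd (h Q) \<noteq> {}"
    if "Q \<in> ?sh" for Q
    proof -
    have "\<exists>p. fst p \<in> ?M \<and> snd p \<in> B (fst p) \<and> snd p \<subseteq> Q \<and> snd p \<noteq> {}" using wit that by blast
    then show ?thesis unfolding h_def by (rule someI_ex)
  qed
  have shc: "?sh \<subseteq> comps V (R - F)" unfolding shattered_def by blast
  have "inj_on h ?sh"
  proof (rule inj_onI)
    fix Q1 Q2 assume Q1: "Q1 \<in> ?sh" and Q2: "Q2 \<in> ?sh" and eq: "h Q1 = h Q2"
    obtain z where z: "z \<in> snd (h Q1)" using hQ[OF Q1] by blast
    have "z \<in> Q1" using z hQ[OF Q1] by blast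
    moreover have "z \<in> Q2" using z hQ[OF Q2] eq by auto
    ultimately show "Q1 = Q2" using comp_eq[of Q1 V "R - F" Q2 z] shc Q1 Q2 by blast
  qed
  moreover have "h ` ?sh \<subseteq> P" unfolding P_def
  proof
    fix p assume "p \<in> h ` ?sh"
    then obtain Q where "Q \<in> ?sh" "p = h Q" by blast
    then have "fst p \<in> ?M" "snd p \<in> B (fst p)" using hQ by auto
    then show "p \<in> Sigma ?M B" by (metis SigmaI prod.collapse)
  qed
  ultimately have "card ?sh \<le> card P" using finP by (meson card_inj_on_le)
  also have "card P = (\<Sum>f\<in>?M. card (B f))" unfolding P_def using finM finB by simp
  finally have cP: "real (card ?sh) \<le> (\<Sum>f\<in>?M. real (card (B f)))" by (metis of_nat_le_iff of_nat_sum)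
  have "real (card ?sh) * \<delta> \<le> (\<Sum>f\<in>?M. real (card (B f)) * \<delta>)"
    using mult_right_mono[OF cP dpos] by (simp add: sum_distrib_right)
  also have "\<dots> \<le> (\<Sum>f\<in>?M. ty E c T f)"
  proof (rule sum_mono)
    fix f assume "f \<in> ?M"
    have "real (card (B f)) * \<delta> = (\<Sum>e\<in>B f. c e)" using cR unfolding B_def by simp
    also have "\<dots> \<le> (\<Sum>e\<in>cut E (tmap T ` tside T f). c e)"
      by (rule sum_mono2) (auto simp: B_def cut_def finE cpos)
    finally show "real (card (B f)) * \<delta> \<le> ty E c T f" unfolding ty_def .
  qed
  also have "\<dots> \<le> 1/2" using gd unfolding good_def .
  finally show ?thesis .
qed



lemma card_E_bound:
  assumes "finite V" "\<forall>e\<in>E. e \<subseteq> V \<and> card e = 2"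
  shows "card E \<le> card V ^ 2"
proof -
  have "E \<subseteq> {B. B \<subseteq> V \<and> card B = 2}" using assms by blast
  moreover have "finite {B. B \<subseteq> V \<and> card B = 2}" using assms(1) by simp
  ultimately have "card E \<le> card {B. B \<subseteq> V \<and> card B = 2}" by (rule card_mono[rotated])
  also have "\<dots> = card V choose 2" using n_subsets[OF assms(1)] .
  also have "\<dots> \<le> card V ^ 2"
  proof (cases "2 \<le> card V")
    case True then show ?thesis by (rule binomial_le_pow)
  next
    case False then show ?thesis by (simp add: binomial_eq_0)
  qed
  finally show ?thesis .
qed

lemma ZF_bound:
  assumes finV: "finite V"
  shows "card (ZF V R q S Tg T F) \<le> 2 ^ card (shattered V R T F) * q"
proof -
  let ?sh = "shattered V R T F"
  have "?sh \<subseteq> Pow V" unfolding shattered_def comps_def comp_def by blast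
  then have finsh: "finite ?sh" using finV by (meson finite_Pow_iff finite_subset)
  define g where "g = (\<lambda>(A'::'a set set, i::nat). (\<Union>A' \<union> QS V (R - F) (S i), \<Union>(?sh - A') \<union> QS V (R - F) (Tg i)))"
  have "ZF V R q S Tg T F \<subseteq> g ` (Pow ?sh \<times> {1..q})"
  proof
    fix z assume "z \<in> ZF V R q S Tg T F"
    then obtain A' B' i where z: "z = (\<Union>A' \<union> QS V (R - F) (S i), \<Union>B' \<union> QS V (R - F) (Tg i))"
      and AB: "A' \<union> B' = ?sh" "A' \<inter> B' = {}" and i: "i \<in> {1..q}"
      unfolding ZF_def by blast
    have "B' = ?sh - A'" using AB by blast
    then have "z = g (A', i)" unfolding z g_def by simp
    moreover have "(A', i) \<in> Pow ?sh \<times> {1..q}" using AB i by blast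
    ultimately show "z \<in> g ` (Pow ?sh \<times> {1..q})" by blast
  qed
  then have "card (ZF V R q S Tg T F) \<le> card (g ` (Pow ?sh \<times> {1..q}))"
    by (rule card_mono[rotated]) (simp add: finsh)
  also have "\<dots> \<le> card (Pow ?sh \<times> {1..q})" by (rule card_image_le) (simp add: finsh)
  also have "\<dots> = 2 ^ card ?sh * q" by (simp add: card_cartesian_product card_Pow finsh)
  finally show ?thesis .
qed

theorem lemma5p10:
  fixes V :: "'v set" and E :: "'v set set" and q :: nat
    and S Tg :: "nat \<Rightarrow> 'v set" and l :: nat and El :: "'v set set"
    and x :: "'v set \<Rightarrow> real" and \<beta> :: real
    and D :: "('n, 'v) tembed pmf" and T :: "('n, 'v) tembed"
  assumes graph: "is_graph V E"
    and ST: "\<forall>i\<in>{1..q}. S i \<subseteq> V \<and> Tg i \<subseteq> V"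
    and l_pos: "l \<ge> 1"
    and El: "El \<subseteq> E" "\<forall>i\<in>{1..q}. edge_connected l V El (S i) (Tg i)"
    and x_range: "\<forall>e\<in>E. 0 \<le> x e \<and> x e \<le> 1"
    and x_El: "\<forall>e\<in>El. x e = 1"
    and x_cut: "\<forall>i\<in>{1..q}. \<forall>X. Tg i \<subseteq> X \<and> X \<subseteq> V - S i \<longrightarrow>
                  (\<Sum>e\<in>cut E X. x e) \<ge> real l + 1"
    and beta: "\<beta> \<ge> 1"
    and D_emb: "\<forall>T'\<in>set_pmf D. is_tree_embedding V E T'"
    and D_load: "\<forall>e\<in>E. (\<integral>\<^sup>+ T'. ennreal (\<Sum>f\<in>Minv T' {e}. ty E (xtilde (card V) x l \<beta>) T' f) \<partial>measure_pmf D)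
                   \<le> ennreal (\<beta> * xtilde (card V) x l \<beta> e)"
    and D_flow: "\<forall>T'\<in>set_pmf D. flow_dominating V E (xtilde (card V) x l \<beta>) T'"
    and T_supp: "T \<in> set_pmf D"
  shows "real (card (\<Union>{ZF V (LARGE E x l \<beta>) q S Tg T F | F.
                 F \<subseteq> LARGE E x l \<beta> \<and> card F = l \<and> good E (xtilde (card V) x l \<beta>) T F}))
         \<le> real q * real (card V) ^ (2 * l) * 2 powr (2 * real l * \<beta>)"
proof -
  define n where "n = card V"
  define L where "L = LARGE E x l \<beta>"
  define c where "c = xtilde (card V) x l \<beta>"
  define \<delta> where "\<delta> = 1 / (4 * real l * \<beta>)"
  define P where "P = 2 powr (2 * real l * \<beta>)"
  have finV: "finite V" and EV2: "\<forall>e\<in>E. e \<subseteq> V \<and> card e = 2" using graph unfolding is_graph_def by auto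
  have EV: "\<forall>e\<in>E. e \<subseteq> V" using EV2 by blast
  have finE: "finite E" using EV finV by (meson Pow_iff finite_Pow_iff finite_subset subsetI)
  have LE: "L \<subseteq> E" unfolding L_def LARGE_def by blast
  have finL: "finite L" using LE finE finite_subset by blast
  have lb: "real l * \<beta> > 0" using l_pos beta by simp
  have dpos: "\<delta> > 0" unfolding \<delta>_def using lb by (simp add: mult.commute)
  have cpos: "\<forall>e\<in>E. 0 \<le> c e" using x_range dpos unfolding c_def xtilde_def \<delta>_def by auto
  have cR: "\<forall>e\<in>L. c e = \<delta>" unfolding c_def L_def LARGE_def xtilde_def \<delta>_def by auto
  have emb: "is_tree_embedding V E T" using D_emb T_supp by blast
  define Fs where "Fs = {F. F \<subseteq> L \<and> card F = l \<and> good E c T F}"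
  have finFs: "finite Fs" unfolding Fs_def using finL by (simp add: finite_subset)
  have ZFb: "real (card (ZF V L q S Tg T F)) \<le> real q * P" if F: "F \<in> Fs" for F
  proof -
    have gd: "good E c T F" using F unfolding Fs_def by blast
    have "real (card (shattered V L T F)) * \<delta> \<le> 1/2"
      using sh_bound[OF emb EV LE finV cpos cR gd] dpos by simp
    then have k: "real (card (shattered V L T F)) \<le> 2 * real l * \<beta>"
      using lb unfolding \<delta>_def by (simp add: field_simps)
    have "real (card (ZF V L q S Tg T F)) \<le> real (2 ^ card (shattered V L T F) * q)"
      using ZF_bound[OF finV] by (meson of_nat_le_iff)
    also have "\<dots> = 2 powr real (card (shattered V L T F)) * real q"
      by (simp add: powr_realpow)
    also have "\<dots> \<le> P * real q" unfolding P_def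
      by (rule mult_right_mono[OF powr_mono[OF k]]) auto
    finally show ?thesis by (simp add: mult.commute)
  qed
  have U: "{ZF V L q S Tg T F | F. F \<subseteq> L \<and> card F = l \<and> good E c T F} = (\<lambda>F. ZF V L q S Tg T F) ` Fs"
    unfolding Fs_def by blast
  have "card (\<Union>((\<lambda>F. ZF V L q S Tg T F) ` Fs)) \<le> (\<Sum>F\<in>Fs. card (ZF V L q S Tg T F))"
    by (rule card_UN_le[OF finFs])
  then have "real (card (\<Union>((\<lambda>F. ZF V L q S Tg T F) ` Fs))) \<le> (\<Sum>F\<in>Fs. real (card (ZF V L q S Tg T F)))"
    by (metis of_nat_le_iff of_nat_sum)
  also have "\<dots> \<le> (\<Sum>F\<in>Fs. real q * P)" by (rule sum_mono) (rule ZFb)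
  also have "\<dots> = real (card Fs) * (real q * P)" by simp
  also have "\<dots> \<le> real (n ^ (2 * l)) * (real q * P)"
  proof (rule mult_right_mono)
    have "card Fs \<le> card {F. F \<subseteq> L \<and> card F = l}"
      by (rule card_mono) (auto simp: Fs_def finL)
    also have "\<dots> = card L choose l" by (rule n_subsets[OF finL])
    also have "\<dots> \<le> n ^ (2 * l)"
    proof (cases "l \<le> card L")
      case True
      have "card L choose l \<le> card L ^ l" by (rule binomial_le_pow[OF True])
      also have "\<dots> \<le> (n ^ 2) ^ l"
      proof (rule power_mono)
        have "card L \<le> card E" using LE finE by (rule card_mono[rotated])
        also have "\<dots> \<le> n ^ 2" unfolding n_def by (rule card_E_bound[OF finV EV2])
        finally show "card L \<le> n ^ 2" .
      qed simp
      also have "\<dots> = n ^ (2 * l)" by (simp add: power_mult)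
      finally show ?thesis .
    next
      case False then show ?thesis by (simp add: binomial_eq_0)
    qed
    finally show "real (card Fs) \<le> real (n ^ (2 * l))" by (meson of_nat_le_iff)
    show "0 \<le> real q * P" unfolding P_def by simp
  qed
  also have "\<dots> = real q * real (card V) ^ (2 * l) * 2 powr (2 * real l * \<beta>)"
    unfolding n_def P_def by simp
  finally have R: "real (card (\<Union>((\<lambda>F. ZF V L q S Tg T F) ` Fs)))
      \<le> real q * real (card V) ^ (2 * l) * 2 powr (2 * real l * \<beta>)" .
  show ?thesis unfolding L_def[symmetric] c_def[symmetric] U using R .
qed

end
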